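(* Let $(X,\sigma)$ be a nondegenerate symplectic space and let $f,h\in X\setminus\{0\}$ with $f\notin\mathbb{R}h$. Then: (i) $R(1,f)\notin[\mathcal{R}(X,\sigma)R(1,h)]$; (ii) $\|R(1,f)-R(1,h)\|\ge1$, with equality if $\sigma(f,h)=0$; (iii) $\mathcal{R}(X,\sigma)$ is nonseparable.
   Context: $[\,\cdot\,]$ denotes closed linear span. The resolvent algebra: let $\mathcal{R}_0$ be the universal unital $*$-algebra generated by $R(\lambda,f)$, $\lambda\in\mathbb{R}\setminus\{0\}$, $f\in X$, subject to (for all $\lambda,\mu,\nu\neq0$, $f,g\in X$): $R(\lambda,0)=-\frac{i}{\lambda}\mathbb{1}$; $R(\lambda,f)^*=R(-\lambda,f)$; $\nu R(\nu\lambda,\nu f)=R(\lambda,f)$; $R(\lambda,f)-R(\mu,f)=i(\mu-\lambda)R(\lambda,f)R(\mu,f)$; $[R(\lambda,f),R(\mu,g)]=i\sigma(f,g)R(\lambda,f)R(\mu,g)^2R(\lambda,f)$; and, for $\lambda+\mu\neq0$, $R(\lambda,f)R(\mu,g)=R(\lambda+\mu,f+g)[R(\lambda,f)+R(\mu,g)+i\sigma(f,g)R(\lambda,f)^2R(\mu,g)]$. $\mathcal{R}(X,\sigma)$ is the C*-algebra obtained by factoring $\mathcal{R}_0$ by the kernel of the enveloping C*-seminorm and completing. *)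

theory Defs
  imports Complex_Main "HOL-Library.Countable_Set"
begin

definition nondeg_symplectic :: "('x::real_vector \<Rightarrow> 'x \<Rightarrow> real) \<Rightarrow> bool" where
  "nondeg_symplectic \<sigma> \<longleftrightarrow>
     (\<forall>g. linear (\<lambda>f. \<sigma> f g)) \<and> (\<forall>f. linear (\<sigma> f)) \<and>
     (\<forall>f g. \<sigma> f g = - \<sigma> g f) \<and>
     (\<forall>f. (\<forall>g. \<sigma> f g = 0) \<longrightarrow> f = 0)"

datatype 'x rexp =
    Gen real 'x          \<comment> \<open>R(lambda, f)\<close>
  | Unit
  | Add "'x rexp" "'x rexp"
  | Mul "'x rexp" "'x rexp"
  | Smul complex "'x rexp"
  | Adj "'x rexp"

definition Sub :: "'x rexp \<Rightarrow> 'x rexp \<Rightarrow> 'x rexp" where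
  "Sub a b = Add a (Smul (-1) b)"

definition Zero :: "'x rexp" where
  "Zero = Smul 0 Unit"

text \<open>The congruence whose quotient is the universal unital *-algebra R_0:
  unital complex *-algebra axioms plus the resolvent relations.
  The junk symbols Gen 0 f (lambda = 0 is not a generator) are set to zero.\<close>

inductive req :: "('x::real_vector \<Rightarrow> 'x \<Rightarrow> real) \<Rightarrow> 'x rexp \<Rightarrow> 'x rexp \<Rightarrow> bool"
  for \<sigma> where
  refl: "req \<sigma> a a"
| sym: "req \<sigma> a b \<Longrightarrow> req \<sigma> b a"
| trans: "req \<sigma> a b \<Longrightarrow> req \<sigma> b c \<Longrightarrow> req \<sigma> a c"
| cong_Add: "req \<sigma> a a' \<Longrightarrow> req \<sigma> b b' \<Longrightarrow> req \<sigma> (Add a b) (Add a' b')"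
| cong_Mul: "req \<sigma> a a' \<Longrightarrow> req \<sigma> b b' \<Longrightarrow> req \<sigma> (Mul a b) (Mul a' b')"
| cong_Smul: "req \<sigma> a a' \<Longrightarrow> req \<sigma> (Smul c a) (Smul c a')"
| cong_Adj: "req \<sigma> a a' \<Longrightarrow> req \<sigma> (Adj a) (Adj a')"
| add_assoc: "req \<sigma> (Add (Add a b) c) (Add a (Add b c))"
| add_comm: "req \<sigma> (Add a b) (Add b a)"
| add_zero: "req \<sigma> (Add a Zero) a"
| smul_zero: "req \<sigma> (Smul 0 a) Zero"
| smul_one: "req \<sigma> (Smul 1 a) a"
| smul_smul: "req \<sigma> (Smul c (Smul d a)) (Smul (c * d) a)"
| smul_add: "req \<sigma> (Smul c (Add a b)) (Add (Smul c a) (Smul c b))"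
| add_smul: "req \<sigma> (Smul (c + d) a) (Add (Smul c a) (Smul d a))"
| mul_assoc: "req \<sigma> (Mul (Mul a b) c) (Mul a (Mul b c))"
| mul_unit_left: "req \<sigma> (Mul Unit a) a"
| mul_unit_right: "req \<sigma> (Mul a Unit) a"
| distrib_left: "req \<sigma> (Mul a (Add b c)) (Add (Mul a b) (Mul a c))"
| distrib_right: "req \<sigma> (Mul (Add a b) c) (Add (Mul a c) (Mul b c))"
| smul_mul_left: "req \<sigma> (Mul (Smul c a) b) (Smul c (Mul a b))"
| smul_mul_right: "req \<sigma> (Mul a (Smul c b)) (Smul c (Mul a b))"
| adj_adj: "req \<sigma> (Adj (Adj a)) a"
| adj_add: "req \<sigma> (Adj (Add a b)) (Add (Adj a) (Adj b))"
| adj_smul: "req \<sigma> (Adj (Smul c a)) (Smul (cnj c) (Adj a))"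
| adj_mul: "req \<sigma> (Adj (Mul a b)) (Mul (Adj b) (Adj a))"
| gen_zero: "req \<sigma> (Gen 0 f) Zero"
| R1: "l \<noteq> 0 \<Longrightarrow> req \<sigma> (Gen l 0) (Smul (- \<i> / complex_of_real l) Unit)"
| R2: "l \<noteq> 0 \<Longrightarrow> req \<sigma> (Adj (Gen l f)) (Gen (- l) f)"
| R3: "l \<noteq> 0 \<Longrightarrow> \<nu> \<noteq> 0 \<Longrightarrow>
        req \<sigma> (Smul (complex_of_real \<nu>) (Gen (\<nu> * l) (\<nu> *\<^sub>R f))) (Gen l f)"
| R4: "l \<noteq> 0 \<Longrightarrow> \<mu> \<noteq> 0 \<Longrightarrow>
        req \<sigma> (Sub (Gen l f) (Gen \<mu> f))
              (Smul (\<i> * complex_of_real (\<mu> - l)) (Mul (Gen l f) (Gen \<mu> f)))"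
| R5: "l \<noteq> 0 \<Longrightarrow> \<mu> \<noteq> 0 \<Longrightarrow>
        req \<sigma> (Sub (Mul (Gen l f) (Gen \<mu> g)) (Mul (Gen \<mu> g) (Gen l f)))
              (Smul (\<i> * complex_of_real (\<sigma> f g))
                 (Mul (Mul (Gen l f) (Mul (Gen \<mu> g) (Gen \<mu> g))) (Gen l f)))"
| R6: "l \<noteq> 0 \<Longrightarrow> \<mu> \<noteq> 0 \<Longrightarrow> l + \<mu> \<noteq> 0 \<Longrightarrow>
        req \<sigma> (Mul (Gen l f) (Gen \<mu> g))
              (Mul (Gen (l + \<mu>) (f + g))
                 (Add (Add (Gen l f) (Gen \<mu> g))
                      (Smul (\<i> * complex_of_real (\<sigma> f g))
                         (Mul (Mul (Gen l f) (Gen l f)) (Gen \<mu> g)))))"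

definition cstar_seminorm :: "('x::real_vector \<Rightarrow> 'x \<Rightarrow> real) \<Rightarrow> ('x rexp \<Rightarrow> real) \<Rightarrow> bool" where
  "cstar_seminorm \<sigma> p \<longleftrightarrow>
     (\<forall>a b. req \<sigma> a b \<longrightarrow> p a = p b) \<and>
     (\<forall>a. 0 \<le> p a) \<and>
     (\<forall>a b. p (Add a b) \<le> p a + p b) \<and>
     (\<forall>c a. p (Smul c a) = cmod c * p a) \<and>
     (\<forall>a b. p (Mul a b) \<le> p a * p b) \<and>
     (\<forall>a. p (Mul (Adj a) a) = (p a)\<^sup>2)"

text \<open>Enveloping C*-seminorm: the supremum of all C*-seminorms; the C*-norm of
  the resolvent algebra on the (dense) image of R_0.\<close>
definition env_norm :: "('x::real_vector \<Rightarrow> 'x \<Rightarrow> real) \<Rightarrow> 'x rexp \<Rightarrow> real" where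
  "env_norm \<sigma> a = Sup {p a | p. cstar_seminorm \<sigma> p}"

fun lspan :: "(complex \<times> 'x rexp) list \<Rightarrow> 'x rexp \<Rightarrow> 'x rexp" where
  "lspan [] r = Zero"
| "lspan ((c, a) # xs) r = Add (Smul c (Mul a r)) (lspan xs r)"

text \<open>e lies in the closed linear span of R(X,sigma) r (in the completion).\<close>
definition in_closed_left_span :: "('x::real_vector \<Rightarrow> 'x \<Rightarrow> real) \<Rightarrow> 'x rexp \<Rightarrow> 'x rexp \<Rightarrow> bool" where
  "in_closed_left_span \<sigma> e r \<longleftrightarrow> (\<forall>\<epsilon>>0. \<exists>xs. env_norm \<sigma> (Sub e (lspan xs r)) < \<epsilon>)"

text \<open>R(X,sigma), the completion of R_0 / ker(env_norm), is separable.\<close>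
definition resolvent_algebra_separable :: "('x::real_vector \<Rightarrow> 'x \<Rightarrow> real) \<Rightarrow> bool" where
  "resolvent_algebra_separable \<sigma> \<longleftrightarrow>
     (\<exists>D. countable D \<and> (\<forall>a. \<forall>\<epsilon>>0. \<exists>d\<in>D. env_norm \<sigma> (Sub a d) < \<epsilon>))"

end

theory Submission
  imports Defs "HOL-Analysis.Continuum_Not_Denumerable"
begin

declare req.trans[trans]

primrec chi :: "'x set \<Rightarrow> 'x rexp \<Rightarrow> complex" where
  "chi S (Gen l k) = (if l \<noteq> 0 \<and> k \<in> S then - \<i> / complex_of_real l else 0)"
| "chi S Unit = 1"
| "chi S (Add a b) = chi S a + chi S b"
| "chi S (Mul a b) = chi S a * chi S b"
| "chi S (Smul c a) = c * chi S a"
| "chi S (Adj a) = cnj (chi S a)"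

lemma chi_Zero[simp]: "chi S Zero = 0" by (simp add: Zero_def)
lemma chi_Sub[simp]: "chi S (Sub a b) = chi S a - chi S b" by (simp add: Sub_def)

definition good :: "('x::real_vector \<Rightarrow> 'x \<Rightarrow> real) \<Rightarrow> 'x set \<Rightarrow> bool" where
 "good \<sigma> S \<longleftrightarrow> 0 \<in> S \<and> (\<forall>\<nu> f. \<nu> \<noteq> 0 \<longrightarrow> (\<nu> *\<^sub>R f \<in> S \<longleftrightarrow> f \<in> S))
   \<and> (\<forall>f g. f \<in> S \<longrightarrow> g \<in> S \<longrightarrow> f + g \<in> S)
   \<and> (\<forall>f g. f \<in> S \<longrightarrow> g \<notin> S \<longrightarrow> f + g \<notin> S \<and> g + f \<notin> S)
   \<and> (\<forall>f g. f \<in> S \<longrightarrow> g \<in> S \<longrightarrow> \<sigma> f g = 0)"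

lemma chi_req:
  assumes "good \<sigma> S" "req \<sigma> a b"
  shows "chi S a = chi S b"
  using assms(2)
proof (induction rule: req.induct)
  case (R1 l)
  then show ?case using assms(1) by (simp add: good_def)
next
  case (R2 l f)
  then show ?case by simp
next
  case (R3 l \<nu> f)
  then show ?case using assms(1) by (auto simp: good_def field_simps)
next
  case (R4 l \<mu> f)
  then show ?case by (auto simp: field_simps)
next
  case (R5 l \<mu> f g)
  then show ?case using assms(1) by (auto simp: good_def)
next
  case (R6 l \<mu> f g)
  have g: "good \<sigma> S" by (rule assms(1))
  show ?case
  proof (cases "f \<in> S")
    case True
    show ?thesis
    proof (cases "g \<in> S")
      case True
      with \<open>f \<in> S\<close> g have "f + g \<in> S" "\<sigma> f g = 0" by (auto simp: good_def)
      moreover have "complex_of_real \<mu> + complex_of_real l \<noteq> 0"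
        using R6 by (metis of_real_add of_real_eq_0_iff add.commute)
      ultimately show ?thesis using R6 \<open>f \<in> S\<close> True
        by (simp add: field_simps)
    next
      case False
      with \<open>f \<in> S\<close> g have "f + g \<notin> S" by (auto simp: good_def)
      with R6 \<open>f \<in> S\<close> False show ?thesis by simp
    qed
  next
    case False
    show ?thesis
    proof (cases "g \<in> S")
      case True
      with \<open>f \<notin> S\<close> g have "f + g \<notin> S" by (auto simp: good_def)
      with R6 \<open>f \<notin> S\<close> True show ?thesis by simp
    next
      case False
      with R6 \<open>f \<notin> S\<close> show ?thesis by simp
    qed
  qed
qed (simp_all add: Zero_def ring_distribs)


lemma good_range:
  assumes ns: "nondeg_symplectic \<sigma>"
  shows "good \<sigma> (range (\<lambda>t::real. t *\<^sub>R g))"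
proof -
  have L1: "linear (\<lambda>f. \<sigma> f y)" for y using ns unfolding nondeg_symplectic_def by blast
  have L2: "linear (\<sigma> x)" for x using ns unfolding nondeg_symplectic_def by blast
  have lin1: "\<sigma> (a *\<^sub>R x) y = a * \<sigma> x y" for a x y
    using linear_scale[OF L1[of y], of a x] by simp
  have lin2: "\<sigma> x (a *\<^sub>R y) = a * \<sigma> x y" for a x y
    using linear_scale[OF L2[of x], of a y] by simp
  have "\<sigma> g g = - \<sigma> g g"
    using ns unfolding nondeg_symplectic_def by blast
  then have gg: "\<sigma> g g = 0" by linarith
  have A: "\<nu> *\<^sub>R f \<in> range (\<lambda>t::real. t *\<^sub>R g) \<longleftrightarrow> f \<in> range (\<lambda>t::real. t *\<^sub>R g)" if "\<nu> \<noteq> 0" for \<nu> f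
  proof
    assume "\<nu> *\<^sub>R f \<in> range (\<lambda>t::real. t *\<^sub>R g)"
    then obtain t where "\<nu> *\<^sub>R f = t *\<^sub>R g" by auto
    have "f = (1 / \<nu>) *\<^sub>R (\<nu> *\<^sub>R f)" using that by simp
    also have "\<dots> = (t / \<nu>) *\<^sub>R g" using \<open>\<nu> *\<^sub>R f = t *\<^sub>R g\<close> by simp
    finally have "f = (t / \<nu>) *\<^sub>R g" .
    then show "f \<in> range (\<lambda>t::real. t *\<^sub>R g)" by auto
  next
    assume "f \<in> range (\<lambda>t::real. t *\<^sub>R g)"
    then obtain t where "f = t *\<^sub>R g" by auto
    then have "\<nu> *\<^sub>R f = (\<nu> * t) *\<^sub>R g" by simp
    then show "\<nu> *\<^sub>R f \<in> range (\<lambda>t::real. t *\<^sub>R g)" by blast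
  qed
  have B: "f + h \<in> range (\<lambda>t::real. t *\<^sub>R g)" if fS: "f \<in> range (\<lambda>t::real. t *\<^sub>R g)" and hS: "h \<in> range (\<lambda>t::real. t *\<^sub>R g)" for f h
  proof -
    obtain s t where "f = s *\<^sub>R g" "h = t *\<^sub>R g" using fS hS by auto
    then have "f + h = (s + t) *\<^sub>R g" by (simp add: scaleR_left_distrib)
    then show ?thesis by blast
  qed
  have C: "f + h \<notin> range (\<lambda>t::real. t *\<^sub>R g) \<and> h + f \<notin> range (\<lambda>t::real. t *\<^sub>R g)"
    if fS: "f \<in> range (\<lambda>t::real. t *\<^sub>R g)" and hS: "h \<notin> range (\<lambda>t::real. t *\<^sub>R g)" for f h
  proof -
    obtain s where s: "f = s *\<^sub>R g" using fS by auto
    have "f + h \<notin> range (\<lambda>t::real. t *\<^sub>R g)"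
    proof
      assume "f + h \<in> range (\<lambda>t::real. t *\<^sub>R g)"
      then obtain t where "f + h = t *\<^sub>R g" by auto
      then have "h = (t - s) *\<^sub>R g" using s by (simp add: algebra_simps)
      then show False using hS by auto
    qed
    then show ?thesis by (simp add: add.commute)
  qed
  have D: "\<sigma> f h = 0" if fS: "f \<in> range (\<lambda>t::real. t *\<^sub>R g)" and hS: "h \<in> range (\<lambda>t::real. t *\<^sub>R g)" for f h
  proof -
    obtain s t where "f = s *\<^sub>R g" "h = t *\<^sub>R g" using fS hS by auto
    then show ?thesis by (simp add: lin1 lin2 gg)
  qed
  have Z: "0 \<in> range (\<lambda>t::real. t *\<^sub>R g)" by (metis rangeI scaleR_zero_left)
  show ?thesis unfolding good_def using A B C D Z by blast
qed

lemma chi_seminorm: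
  assumes "good \<sigma> S"
  shows "cstar_seminorm \<sigma> (\<lambda>a. cmod (chi S a))"
  unfolding cstar_seminorm_def
  using chi_req[OF assms]
  by (auto simp: norm_triangle_ineq norm_mult power2_eq_square)

lemma cs_req: "cstar_seminorm \<sigma> p \<Longrightarrow> req \<sigma> a b \<Longrightarrow> p a = p b"
  by (simp add: cstar_seminorm_def)
lemma cs_nonneg: "cstar_seminorm \<sigma> p \<Longrightarrow> 0 \<le> p a"
  by (simp add: cstar_seminorm_def)
lemma cs_add: "cstar_seminorm \<sigma> p \<Longrightarrow> p (Add a b) \<le> p a + p b"
  by (simp add: cstar_seminorm_def)
lemma cs_smul: "cstar_seminorm \<sigma> p \<Longrightarrow> p (Smul c a) = cmod c * p a"
  by (simp add: cstar_seminorm_def)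
lemma cs_mul: "cstar_seminorm \<sigma> p \<Longrightarrow> p (Mul a b) \<le> p a * p b"
  by (simp add: cstar_seminorm_def)
lemma cs_cstar: "cstar_seminorm \<sigma> p \<Longrightarrow> p (Mul (Adj a) a) = (p a)\<^sup>2"
  by (simp add: cstar_seminorm_def)
lemma cs_sub: "cstar_seminorm \<sigma> p \<Longrightarrow> p (Sub a b) \<le> p a + p b"
  using cs_add[of \<sigma> p a "Smul (-1) b"] cs_smul[of \<sigma> p "-1" b] by (simp add: Sub_def)

lemma cs_Adj:
  assumes p: "cstar_seminorm \<sigma> p"
  shows "p (Adj a) = p a"
proof -
  have le: "p x \<le> p (Adj x)" for x
  proof -
    have "p x * p x = p (Mul (Adj x) x)" using cs_cstar[OF p] by (simp add: power2_eq_square)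
    also have "\<dots> \<le> p (Adj x) * p x" using cs_mul[OF p] .
    finally have *: "p x * p x \<le> p (Adj x) * p x" .
    show ?thesis
    proof (cases "p x = 0")
      case True then show ?thesis using cs_nonneg[OF p] by simp
    next
      case False
      then have "0 < p x" using cs_nonneg[OF p, of x] by simp
      with * show ?thesis by (simp add: mult_le_cancel_right)
    qed
  qed
  have "p (Adj a) \<le> p (Adj (Adj a))" by (rule le)
  also have "\<dots> = p a" using cs_req[OF p req.adj_adj] .
  finally show ?thesis using le[of a] by simp
qed

lemma cs_Gen:
  assumes p: "cstar_seminorm \<sigma> p" and l: "l \<noteq> 0"
  shows "p (Gen l f) \<le> 1 / \<bar>l\<bar>"
proof -
  let ?r = "Gen l f" and ?r' = "Gen (-l) f"
  define k where "k = 1 / (\<i> * complex_of_real (l - - l))"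
  have h1: "req \<sigma> (Sub ?r' ?r) (Smul (\<i> * complex_of_real (l - - l)) (Mul ?r' ?r))"
    using req.R4[of "-l" l \<sigma> f] l by simp
  have "req \<sigma> (Smul k (Sub ?r' ?r)) (Smul k (Smul (\<i> * complex_of_real (l - - l)) (Mul ?r' ?r)))"
    using h1 by (rule req.cong_Smul)
  also have "req \<sigma> \<dots> (Smul (k * (\<i> * complex_of_real (l - - l))) (Mul ?r' ?r))"
    by (rule req.smul_smul)
  also have "k * (\<i> * complex_of_real (l - - l)) = 1" unfolding k_def using l by simp
  also have "req \<sigma> (Smul 1 (Mul ?r' ?r)) (Mul ?r' ?r)" by (rule req.smul_one)
  finally have h2: "req \<sigma> (Smul k (Sub ?r' ?r)) (Mul ?r' ?r)" .
  have h3: "req \<sigma> (Mul (Adj ?r) ?r) (Mul ?r' ?r)"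
    using l by (intro req.cong_Mul req.R2 req.refl)
  have "(p ?r)\<^sup>2 = p (Mul (Adj ?r) ?r)" using cs_cstar[OF p] by simp
  also have "\<dots> = p (Smul k (Sub ?r' ?r))" using cs_req[OF p h3] cs_req[OF p h2] by simp
  also have "\<dots> = cmod k * p (Sub ?r' ?r)" by (rule cs_smul[OF p])
  also have "\<dots> \<le> cmod k * (p ?r' + p ?r)" by (rule mult_left_mono[OF cs_sub[OF p]]) simp
  also have "p ?r' = p ?r" using cs_req[OF p req.R2[OF l, of \<sigma> f]] cs_Adj[OF p] by simp
  also have "cmod k = 1 / (2 * \<bar>l\<bar>)" unfolding k_def by (simp add: norm_divide norm_mult)
  finally have "(p ?r)\<^sup>2 \<le> p ?r / \<bar>l\<bar>" by simp
  then have *: "p ?r * p ?r \<le> (1 / \<bar>l\<bar>) * p ?r" by (simp add: power2_eq_square)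
  show ?thesis
  proof (cases "p ?r = 0")
    case False
    then have "0 < p ?r" using cs_nonneg[OF p, of ?r] by simp
    then show ?thesis using * mult_right_le_imp_le by blast
  qed simp
qed

lemma cs_Unit:
  assumes p: "cstar_seminorm \<sigma> p"
  shows "p Unit \<le> 1"
proof -
  have "req \<sigma> (Smul \<i> (Gen 1 0)) (Smul \<i> (Smul (-\<i>) Unit))"
    using req.R1[of 1 \<sigma>] by (intro req.cong_Smul) simp
  also have "req \<sigma> \<dots> (Smul (\<i> * - \<i>) Unit)" by (rule req.smul_smul)
  also have "(\<i> * - \<i>) = 1" by simp
  also have "req \<sigma> (Smul 1 Unit) Unit" by (rule req.smul_one)
  finally have "p Unit = p (Smul \<i> (Gen 1 0))" using cs_req[OF p] by metis
  also have "\<dots> = p (Gen 1 0)" using cs_smul[OF p] by simp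
  also have "\<dots> \<le> 1" using cs_Gen[OF p, of 1] by simp
  finally show ?thesis .
qed

lemma cs_Zero: "cstar_seminorm \<sigma> p \<Longrightarrow> p Zero = 0"
  unfolding Zero_def by (simp add: cs_smul)

primrec bnd :: "'x rexp \<Rightarrow> real" where
  "bnd (Gen l f) = (if l = 0 then 0 else 1 / \<bar>l\<bar>)"
| "bnd Unit = 1"
| "bnd (Add a b) = bnd a + bnd b"
| "bnd (Mul a b) = bnd a * bnd b"
| "bnd (Smul c a) = cmod c * bnd a"
| "bnd (Adj a) = bnd a"

lemma cs_bnd:
  assumes p: "cstar_seminorm \<sigma> p"
  shows "p a \<le> bnd a"
proof (induction a)
  case (Gen l f)
  show ?case
  proof (cases "l = 0")
    case True
    then show ?thesis using cs_req[OF p req.gen_zero[of \<sigma> f]] cs_Zero[OF p] by simp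
  qed (use cs_Gen[OF p] in simp)
next
  case Unit then show ?case using cs_Unit[OF p] by simp
next
  case (Add a b) then show ?case using cs_add[OF p, of a b] by simp
next
  case (Mul a b) then show ?case using cs_mul[OF p, of a b] cs_nonneg[OF p]
    by (simp) (meson mult_mono order_trans)
next
  case (Smul c a) then show ?case using cs_smul[OF p] by (simp add: mult_left_mono)
next
  case (Adj a) then show ?case using cs_Adj[OF p] by simp
qed

lemma env_ge:
  assumes "cstar_seminorm \<sigma> p"
  shows "p a \<le> env_norm \<sigma> a"
  unfolding env_norm_def
proof (rule cSup_upper)
  show "p a \<in> {p a |p. cstar_seminorm \<sigma> p}" using assms by blast
  show "bdd_above {p a |p. cstar_seminorm \<sigma> p}"
    by (rule bdd_aboveI[of _ "bnd a"]) (auto dest: cs_bnd)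
qed

lemma env_le:
  assumes "cstar_seminorm \<sigma> q" and "\<And>p. cstar_seminorm \<sigma> p \<Longrightarrow> p a \<le> c"
  shows "env_norm \<sigma> a \<le> c"
  unfolding env_norm_def
  using assms by (intro cSup_least) auto

lemma req_adj_unit: "req \<sigma> (Adj Unit) Unit"
proof -
  have "req \<sigma> (Adj Unit) (Mul (Adj Unit) Unit)" by (rule req.sym[OF req.mul_unit_right])
  also have "req \<sigma> \<dots> (Mul (Adj Unit) (Adj (Adj Unit)))"
    by (intro req.cong_Mul req.refl req.sym[OF req.adj_adj])
  also have "req \<sigma> \<dots> (Adj (Mul (Adj Unit) Unit))" by (rule req.sym[OF req.adj_mul])
  also have "req \<sigma> \<dots> (Adj (Adj Unit))" by (intro req.cong_Adj req.mul_unit_right)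
  also have "req \<sigma> \<dots> Unit" by (rule req.adj_adj)
  finally show ?thesis .
qed

lemma req_swap: "req \<sigma> (Add (Add x y) z) (Add (Add x z) y)"
proof -
  have "req \<sigma> (Add (Add x y) z) (Add x (Add y z))" by (rule req.add_assoc)
  also have "req \<sigma> \<dots> (Add x (Add z y))" by (intro req.cong_Add req.refl req.add_comm)
  also have "req \<sigma> \<dots> (Add (Add x z) y)" by (rule req.sym[OF req.add_assoc])
  finally show ?thesis .
qed

lemma req_zero_left: "req \<sigma> (Add Zero x) x"
  using req.trans[OF req.add_comm req.add_zero] .

lemma req_cancel:
  assumes "k + m = 0" shows "req \<sigma> (Add (Smul k x) (Smul m x)) Zero"
proof -
  have "req \<sigma> (Add (Smul k x) (Smul m x)) (Smul (k+m) x)" by (rule req.sym[OF req.add_smul])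
  then have "req \<sigma> (Add (Smul k x) (Smul m x)) (Smul 0 x)" using assms by simp
  then show ?thesis using req.smul_zero by (rule req.trans)
qed

lemma req_smul_unit_mul: "req \<sigma> (Mul (Smul d Unit) a) (Smul d a)"
  using req.trans[OF req.smul_mul_left req.cong_Smul[OF req.mul_unit_left]] .

lemma req_mul_smul_unit: "req \<sigma> (Mul a (Smul d Unit)) (Smul d a)"
  using req.trans[OF req.smul_mul_right req.cong_Smul[OF req.mul_unit_right]] .

lemma cs_half:
  assumes p: "cstar_seminorm \<sigma> p"
  shows "p (Add (Gen 1 f) (Smul (\<i>/2) Unit)) \<le> 1/2"
proof -
  let ?a = "Gen 1 f" and ?a' = "Gen (-1) f"
  define c :: complex where "c = \<i>/2"
  define d :: complex where "d = -\<i>/2"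
  let ?C = "Smul c Unit" and ?D = "Smul d Unit" and ?M = "Mul ?a' ?a"
  let ?Q = "Smul (1/4) Unit"
  have adj: "req \<sigma> (Adj (Add ?a ?C)) (Add ?a' ?D)"
  proof -
    have "req \<sigma> (Adj (Add ?a ?C)) (Add (Adj ?a) (Adj ?C))" by (rule req.adj_add)
    also have "req \<sigma> \<dots> (Add ?a' (Smul (cnj c) (Adj Unit)))"
      by (intro req.cong_Add req.R2 req.adj_smul) simp
    also have "req \<sigma> \<dots> (Add ?a' (Smul (cnj c) Unit))"
      by (intro req.cong_Add req.refl req.cong_Smul req_adj_unit)
    also have "cnj c = d" unfolding c_def d_def by (simp add: complex_eq_iff)
    finally show ?thesis .
  qed
  have M: "req \<sigma> ?M (Add (Smul d ?a') (Smul c ?a))"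
  proof -
    have h1: "req \<sigma> (Sub ?a' ?a) (Smul (\<i> * complex_of_real (1 - - 1)) ?M)"
      using req.R4[of "-1" 1 \<sigma> f] by simp
    have "req \<sigma> ?M (Smul 1 ?M)" by (rule req.sym[OF req.smul_one])
    also have "(1::complex) = d * (\<i> * complex_of_real (1 - - 1))" unfolding d_def by simp
    also have "req \<sigma> (Smul (d * (\<i> * complex_of_real (1 - - 1))) ?M) (Smul d (Smul (\<i> * complex_of_real (1 - - 1)) ?M))"
      by (rule req.sym[OF req.smul_smul])
    also have "req \<sigma> \<dots> (Smul d (Sub ?a' ?a))" by (intro req.cong_Smul req.sym[OF h1])
    also have "req \<sigma> \<dots> (Add (Smul d ?a') (Smul d (Smul (-1) ?a)))"
      unfolding Sub_def by (rule req.smul_add)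
    also have "req \<sigma> \<dots> (Add (Smul d ?a') (Smul (d * -1) ?a))"
      by (intro req.cong_Add req.refl req.smul_smul)
    also have "d * -1 = c" unfolding c_def d_def by simp
    finally show ?thesis .
  qed
  have "req \<sigma> (Mul (Adj (Add ?a ?C)) (Add ?a ?C)) (Mul (Add ?a' ?D) (Add ?a ?C))"
    by (intro req.cong_Mul adj req.refl)
  also have "req \<sigma> \<dots> (Add (Mul ?a' (Add ?a ?C)) (Mul ?D (Add ?a ?C)))" by (rule req.distrib_right)
  also have "req \<sigma> \<dots> (Add (Add ?M (Mul ?a' ?C)) (Add (Mul ?D ?a) (Mul ?D ?C)))"
    by (intro req.cong_Add req.distrib_left)
  also have "req \<sigma> \<dots> (Add (Add (Add (Smul d ?a') (Smul c ?a)) (Smul c ?a')) (Add (Smul d ?a) (Smul d ?C)))"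
    by (intro req.cong_Add M req_mul_smul_unit req_smul_unit_mul)
  also have "req \<sigma> \<dots> (Add (Add (Add (Smul d ?a') (Smul c ?a')) (Smul c ?a)) (Add (Smul d ?a) (Smul (d * c) Unit)))"
    by (intro req.cong_Add req_swap req.refl req.smul_smul)
  also have "req \<sigma> \<dots> (Add (Add Zero (Smul c ?a)) (Add (Smul d ?a) (Smul (d * c) Unit)))"
    by (intro req.cong_Add req.refl req_cancel) (simp add: c_def d_def)
  also have "req \<sigma> \<dots> (Add (Smul c ?a) (Add (Smul d ?a) (Smul (d * c) Unit)))"
    by (intro req.cong_Add req.refl req_zero_left)
  also have "req \<sigma> \<dots> (Add (Add (Smul c ?a) (Smul d ?a)) (Smul (d * c) Unit))"
    by (rule req.sym[OF req.add_assoc])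
  also have "req \<sigma> \<dots> (Add Zero (Smul (d * c) Unit))"
    by (intro req.cong_Add req.refl req_cancel) (simp add: c_def d_def)
  also have "req \<sigma> \<dots> (Smul (d * c) Unit)" by (rule req_zero_left)
  finally have E: "req \<sigma> (Mul (Adj (Add ?a ?C)) (Add ?a ?C)) (Smul (d * c) Unit)" .
  have dc: "cmod (d * c) = 1/4" unfolding c_def d_def by (simp add: norm_mult norm_divide)
  have "(p (Add ?a ?C))\<^sup>2 = p (Smul (d * c) Unit)" using cs_cstar[OF p] cs_req[OF p E] by simp
  also have "\<dots> = 1/4 * p Unit" using cs_smul[OF p] dc by simp
  also have "\<dots> \<le> 1/4" using cs_Unit[OF p] by simp
  finally have "(p (Add ?a ?C))\<^sup>2 \<le> (1/2)\<^sup>2" by (simp add: power2_eq_square)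
  then have "p (Add ?a ?C) \<le> 1/2" by (rule power2_le_imp_le) simp
  then show ?thesis unfolding c_def .
qed

lemma cs_diff:
  assumes p: "cstar_seminorm \<sigma> p"
  shows "p (Sub (Gen 1 f) (Gen 1 h)) \<le> 1"
proof -
  let ?a = "Gen 1 f" and ?b = "Gen 1 h" and ?C = "Smul (\<i>/2) Unit"
  have "req \<sigma> (Add (Add ?a ?C) (Smul (-1) (Add ?b ?C))) (Add (Add ?a ?C) (Add (Smul (-1) ?b) (Smul (-1) ?C)))"
    by (intro req.cong_Add req.refl req.smul_add)
  also have "req \<sigma> \<dots> (Add (Add ?a ?C) (Add (Smul (-1) ?C) (Smul (-1) ?b)))"
    by (intro req.cong_Add req.refl req.add_comm)
  also have "req \<sigma> \<dots> (Add (Add (Add ?a ?C) (Smul (-1) ?C)) (Smul (-1) ?b))"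
    by (rule req.sym[OF req.add_assoc])
  also have "req \<sigma> \<dots> (Add (Add ?a (Add ?C (Smul (-1) ?C))) (Smul (-1) ?b))"
    by (intro req.cong_Add req.refl req.add_assoc)
  also have "req \<sigma> \<dots> (Add (Add ?a (Add (Smul 1 ?C) (Smul (-1) ?C))) (Smul (-1) ?b))"
    by (intro req.cong_Add req.refl req.sym[OF req.smul_one])
  also have "req \<sigma> \<dots> (Add (Add ?a Zero) (Smul (-1) ?b))"
    by (intro req.cong_Add req.refl req_cancel) simp
  also have "req \<sigma> \<dots> (Add ?a (Smul (-1) ?b))"
    by (intro req.cong_Add req.refl req.add_zero)
  finally have E: "req \<sigma> (Add (Add ?a ?C) (Smul (-1) (Add ?b ?C))) (Sub ?a ?b)"
    unfolding Sub_def .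
  have "p (Sub ?a ?b) = p (Add (Add ?a ?C) (Smul (-1) (Add ?b ?C)))" using cs_req[OF p E] by simp
  also have "\<dots> \<le> p (Add ?a ?C) + p (Add ?b ?C)" using cs_add[OF p] cs_smul[OF p] by (metis norm_minus_cancel norm_one mult_1)
  also have "\<dots> \<le> 1" using cs_half[OF p, of f] cs_half[OF p, of h] by simp
  finally show ?thesis .
qed

lemma chi_lspan: "chi S r = 0 \<Longrightarrow> chi S (lspan xs r) = 0"
  by (induction xs) auto

theorem theorem5p3:
  fixes \<sigma> :: "'x::real_vector \<Rightarrow> 'x \<Rightarrow> real" and f h :: 'x
  assumes "nondeg_symplectic \<sigma>"
    and "f \<noteq> 0" and "h \<noteq> 0"
    and "f \<notin> range (\<lambda>t::real. t *\<^sub>R h)"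
  shows "(\<not> in_closed_left_span \<sigma> (Gen 1 f) (Gen 1 h))
    \<and> env_norm \<sigma> (Sub (Gen 1 f) (Gen 1 h)) \<ge> 1
    \<and> (\<sigma> f h = 0 \<longrightarrow> env_norm \<sigma> (Sub (Gen 1 f) (Gen 1 h)) = 1)
    \<and> \<not> resolvent_algebra_separable \<sigma>"
proof -
  note ns = assms(1)
  have mem_self: "g \<in> range (\<lambda>t::real. t *\<^sub>R g)" for g :: 'x
    by (metis rangeI scaleR_one)
  have env_chi: "cmod (chi (range (\<lambda>t::real. t *\<^sub>R g)) a) \<le> env_norm \<sigma> a" for g a
    using env_ge[OF chi_seminorm[OF good_range[OF ns]]] .
  have hnotf: "h \<notin> range (\<lambda>t::real. t *\<^sub>R f)"
  proof
    assume "h \<in> range (\<lambda>t::real. t *\<^sub>R f)"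
    then obtain t where t: "h = t *\<^sub>R f" by auto
    with assms(3) have "t \<noteq> 0" by auto
    then have "f = (1/t) *\<^sub>R h" using t by simp
    then show False using assms(4) by auto
  qed
  have i: "\<not> in_closed_left_span \<sigma> (Gen 1 f) (Gen 1 h)"
  proof
    assume "in_closed_left_span \<sigma> (Gen 1 f) (Gen 1 h)"
    then obtain xs where xs: "env_norm \<sigma> (Sub (Gen 1 f) (lspan xs (Gen 1 h))) < 1"
      unfolding in_closed_left_span_def by (meson zero_less_one)
    have "chi (range (\<lambda>t::real. t *\<^sub>R f)) (Gen 1 h) = 0" using hnotf by simp
    then have "chi (range (\<lambda>t::real. t *\<^sub>R f)) (lspan xs (Gen 1 h)) = 0" by (rule chi_lspan)
    then have "cmod (chi (range (\<lambda>t::real. t *\<^sub>R f)) (Sub (Gen 1 f) (lspan xs (Gen 1 h)))) = 1"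
      using mem_self[of f] by simp
    then show False using env_chi[of f "Sub (Gen 1 f) (lspan xs (Gen 1 h))"] xs by linarith
  qed
  have ge: "env_norm \<sigma> (Sub (Gen 1 f) (Gen 1 h)) \<ge> 1"
  proof -
    have "cmod (chi (range (\<lambda>t::real. t *\<^sub>R h)) (Sub (Gen 1 f) (Gen 1 h))) = 1"
      using mem_self[of h] assms(4) by simp
    then show ?thesis using env_chi[of h "Sub (Gen 1 f) (Gen 1 h)"] by linarith
  qed
  have le: "env_norm \<sigma> (Sub (Gen 1 f) (Gen 1 h)) \<le> 1"
    by (rule env_le[OF chi_seminorm[OF good_range[OF ns]] cs_diff])
  have iii: "\<not> resolvent_algebra_separable \<sigma>"
  proof
    assume "resolvent_algebra_separable \<sigma>"
    then obtain D where D: "countable D" "\<forall>a. \<forall>\<epsilon>>0. \<exists>d\<in>D. env_norm \<sigma> (Sub a d) < \<epsilon>"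
      unfolding resolvent_algebra_separable_def by blast
    define g where "g t = f + t *\<^sub>R h" for t :: real
    have "\<forall>t. \<exists>d\<in>D. env_norm \<sigma> (Sub (Gen 1 (g t)) d) < 1/2" using D(2) by (meson half_gt_zero zero_less_one)
    then obtain dd where dd: "\<And>t. dd t \<in> D" "\<And>t. env_norm \<sigma> (Sub (Gen 1 (g t)) (dd t)) < 1/2"
      by metis
    have "\<not> inj dd"
    proof
      assume "inj dd"
      have "countable (dd ` UNIV)" using D(1) dd(1) by (meson countable_subset image_subsetI)
      then have "countable (UNIV::real set)" using \<open>inj dd\<close> countable_image_inj_on by blast
      then show False using uncountable_UNIV_real by simp
    qed
    then obtain s t where st: "s \<noteq> t" "dd s = dd t" unfolding inj_def by blast
    have notin: "g s \<notin> range (\<lambda>r::real. r *\<^sub>R g t)"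
    proof
      assume "g s \<in> range (\<lambda>r::real. r *\<^sub>R g t)"
      then obtain r where "f + s *\<^sub>R h = r *\<^sub>R (f + t *\<^sub>R h)" by (auto simp: g_def)
      then have e: "(1 - r) *\<^sub>R f = (r*t - s) *\<^sub>R h" by (simp add: algebra_simps)
      show False
      proof (cases "r = 1")
        case True
        then have "(t - s) *\<^sub>R h = 0" using e by (auto simp: algebra_simps)
        then show False using st(1) assms(3) by auto
      next
        case False
        have "f = (1/(1-r)) *\<^sub>R ((1 - r) *\<^sub>R f)" using False by simp
        also have "\<dots> = ((r*t - s)/(1-r)) *\<^sub>R h" using e by simp
        finally show False using assms(4) by auto
      qed
    qed
    let ?S = "range (\<lambda>r::real. r *\<^sub>R g t)"
    have c1: "cmod (- \<i> - chi ?S (dd t)) < 1/2"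
      using env_chi[of "g t" "Sub (Gen 1 (g t)) (dd t)"] dd(2)[of t] mem_self[of "g t"] by simp
    have c2: "cmod (chi ?S (dd t)) < 1/2"
      using env_chi[of "g t" "Sub (Gen 1 (g s)) (dd s)"] dd(2)[of s] notin st(2) by simp
    have "cmod (- \<i>) \<le> cmod (- \<i> - chi ?S (dd t)) + cmod (chi ?S (dd t))"
      using norm_triangle_ineq[of "- \<i> - chi ?S (dd t)" "chi ?S (dd t)"] by simp
    then show False using c1 c2 by simp
  qed
  show ?thesis using i ge le iii by simp
qed

end
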